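(* $\mathtt{incl}$-$\mathtt{ESO}$-$\mathtt{HORN}=\mathtt{Trellis}$.
   Context: Fix a finite alphabet $\Sigma$. A nonempty word $w=w_1\cdots w_n$ is represented by the structure $\langle w\rangle=([1,n];(Q_s)_{s\in\Sigma},\mathtt{min},\mathtt{max},\mathtt{suc},\mathtt{pred})$ with $Q_s(i)\iff w_i=s$, $\mathtt{min}(i)\iff i=1$, $\mathtt{max}(i)\iff i=n$, $\mathtt{suc}(i)=\min(i+1,n)$, $\mathtt{pred}(i)=\max(i-1,1)$. For an integer $a$, $x+a$ denotes $\mathtt{suc}^a(x)$ if $a\ge0$ and $\mathtt{pred}^{-a}(x)$ if $a<0$; $y-b=\mathtt{pred}^b(y)$. An inclusion Horn formula is $\Phi=\exists\mathbf{R}\forall x\forall y\,\psi(x,y)$, $\mathbf{R}$ a finite set of binary relation symbols, $\psi$ a conjunction of Horn clauses over the signature $\{(Q_s)_{s\in\Sigma},\mathtt{min},\mathtt{max},\mathtt{suc},\mathtt{pred}\}\cup\mathbf{R}\cup\{=,\le,<\}$, each of the form $x\le y\wedge\delta_1\wedge\cdots\wedge\delta_r\to\delta_0$ with $\delta_0$ an atom $R(x,y)$ ($R\in\mathbf{R}$) or $\bot$, and each $\delta_i$ one of: $U(x+a)$, $\neg U(x+a)$, $U(y+a)$, $\neg U(y+a)$ for $U\in\{(Q_s)_{s\in\Sigma},\mathtt{min},\mathtt{max}\}$ and $a\in\mathbb Z$; $x=y$ or $x<y$; a conjunction $S(x+a,y-b)\wedge x+a\le y-b$ with $S\in\mathbf{R}$,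 integers $a,b\ge0$. $\mathtt{incl}$-$\mathtt{ESO}$-$\mathtt{HORN}$ is the class of languages $\{w\in\Sigma^+:\langle w\rangle\models\Phi\}$ for such $\Phi$. A one-way cellular automaton (OCA) is $(Q,\Sigma,Q_{accept},\mathcal N,\delta)$ with finite $Q\supseteq\Sigma$, $Q_{accept}\subseteq Q$, $\mathcal N=\{-1,0\}$, $\delta:Q^2\to Q$. On input $w=w_1\cdots w_n$ it works on cells $1,\dots,n$ (cells outside are permanently in a state $\sharp$), with parallel input $\langle c,1\rangle=w_c$ and $\langle c,t\rangle=\delta(\langle c-1,t-1\rangle,\langle c,t-1\rangle)$ for $t>1$, where $\langle c,t\rangle$ is the state of cell $c$ at time $t$. $\mathtt{Trellis}$ is the class of languages $L\subseteq\Sigma^+$ accepted in real time by such an automaton, i.e. such that $w\in L\iff\langle n,n\rangle\in Q_{accept}$ for every $w$ of length $n$ (equivalently, languages accepted by trellis automata). *)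

theory Defs
  imports Main
begin

text \<open>A nonempty word w of length n is viewed as the structure on positions 1..n.
  Positions are natural numbers; w_i is  w ! (i - 1).\<close>

definition suc_w :: "nat \<Rightarrow> nat \<Rightarrow> nat" where
  "suc_w n i = min (i + 1) n"

definition pred_w :: "nat \<Rightarrow> nat" where
  "pred_w i = max (i - 1) 1"

definition shift :: "nat \<Rightarrow> nat \<Rightarrow> int \<Rightarrow> nat" where
  "shift n x a = (if a \<ge> 0 then (suc_w n ^^ nat a) x else (pred_w ^^ nat (- a)) x)"

definition minus_w :: "nat \<Rightarrow> nat \<Rightarrow> nat" where
  "minus_w y b = (pred_w ^^ b) y"

datatype 's upred = Qs 's | MinP | MaxP

datatype fovar = VX | VY

text \<open>Hypothesis literals delta_i (i >= 1):
  ULit True U v a  is  U(v+a);  ULit False U v a  is  \<not>U(v+a);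
  XeqY is x = y; XltY is x < y;
  RLit S a b  is  S(x+a, y-b) \<and> x+a \<le> y-b  with a, b >= 0 (natural numbers).\<close>
datatype 's hlit =
    ULit bool "'s upred" fovar int
  | XeqY
  | XltY
  | RLit nat nat nat

datatype hhead = HRel nat | HBot

type_synonym 's hclause = "'s hlit list \<times> hhead"

text \<open>The first-order part psi: a (finite) conjunction of Horn clauses.
  Each clause (ls, h) stands for  x \<le> y \<and> /\ ls \<longrightarrow> h.\<close>
type_synonym 's incl_horn = "'s hclause list"

definition upred_holds :: "'s list \<Rightarrow> 's upred \<Rightarrow> nat \<Rightarrow> bool" where
  "upred_holds w U i = (case U of
      Qs s \<Rightarrow> w ! (i - 1) = s
    | MinP \<Rightarrow> i = 1
    | MaxP \<Rightarrow> i = length w)"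

fun hlit_holds :: "'s list \<Rightarrow> (nat \<Rightarrow> nat \<Rightarrow> nat \<Rightarrow> bool) \<Rightarrow> nat \<Rightarrow> nat \<Rightarrow> 's hlit \<Rightarrow> bool" where
  "hlit_holds w I x y (ULit pos U v a) =
     (let p = shift (length w) (case v of VX \<Rightarrow> x | VY \<Rightarrow> y) a
      in if pos then upred_holds w U p else \<not> upred_holds w U p)"
| "hlit_holds w I x y XeqY = (x = y)"
| "hlit_holds w I x y XltY = (x < y)"
| "hlit_holds w I x y (RLit S a b) =
     (I S (shift (length w) x (int a)) (minus_w y b) \<and>
      shift (length w) x (int a) \<le> minus_w y b)"

fun hhead_holds :: "(nat \<Rightarrow> nat \<Rightarrow> nat \<Rightarrow> bool) \<Rightarrow> nat \<Rightarrow> nat \<Rightarrow> hhead \<Rightarrow> bool" where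
  "hhead_holds I x y (HRel R) = I R x y"
| "hhead_holds I x y HBot = False"

definition hclause_holds :: "'s list \<Rightarrow> (nat \<Rightarrow> nat \<Rightarrow> nat \<Rightarrow> bool) \<Rightarrow> nat \<Rightarrow> nat \<Rightarrow> 's hclause \<Rightarrow> bool" where
  "hclause_holds w I x y C =
     (x \<le> y \<and> (\<forall>l \<in> set (fst C). hlit_holds w I x y l) \<longrightarrow> hhead_holds I x y (snd C))"

text \<open>\<langle>w\<rangle> \<Turnstile> \<exists>R \<forall>x \<forall>y psi(x,y).  I interprets the relation symbols
  (binary relations on positions; only their values on 1..n matter).\<close>
definition incl_horn_models :: "'s list \<Rightarrow> 's incl_horn \<Rightarrow> bool" where
  "incl_horn_models w \<Phi> =
     (\<exists>I :: nat \<Rightarrow> nat \<Rightarrow> nat \<Rightarrow> bool.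
        \<forall>x y. 1 \<le> x \<and> x \<le> length w \<and> 1 \<le> y \<and> y \<le> length w \<longrightarrow>
          (\<forall>C \<in> set \<Phi>. hclause_holds w I x y C))"

definition incl_horn_lang :: "'s incl_horn \<Rightarrow> 's list set" where
  "incl_horn_lang \<Phi> = {w. w \<noteq> [] \<and> incl_horn_models w \<Phi>}"

definition incl_ESO_HORN :: "('s::finite) list set set" where
  "incl_ESO_HORN = {L. \<exists>\<Phi>. L = incl_horn_lang \<Phi>}"

text \<open>States are of type 's + nat so that the alphabet (embedded by Inl) is a
  subset of the state set Q.  oca_state delta sh w c t is the state of cell c at
  time t (both 1-based); cell 0 (left of cell 1) is permanently in state sh.\<close>
fun oca_state :: "('q \<Rightarrow> 'q \<Rightarrow> 'q) \<Rightarrow> 'q \<Rightarrow> ('s \<Rightarrow> 'q) \<Rightarrow> 's list \<Rightarrow> nat \<Rightarrow> nat \<Rightarrow> 'q" where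
  "oca_state \<delta> sh inp w c 0 = sh"
| "oca_state \<delta> sh inp w c (Suc 0) = (if 1 \<le> c \<and> c \<le> length w then inp (w ! (c - 1)) else sh)"
| "oca_state \<delta> sh inp w c (Suc (Suc t)) =
     (if 1 \<le> c \<and> c \<le> length w then
        \<delta> (oca_state \<delta> sh inp w (c - 1) (Suc t)) (oca_state \<delta> sh inp w c (Suc t))
      else sh)"

definition Trellis :: "('s::finite) list set set" where
  "Trellis = {L. L \<subseteq> {w. w \<noteq> []} \<and>
     (\<exists>(Q :: ('s + nat) set) Qacc sh \<delta>.
        finite Q \<and> range Inl \<subseteq> Q \<and> sh \<notin> Q \<and> Qacc \<subseteq> Q \<and>
        (\<forall>q \<in> insert sh Q. \<forall>q' \<in> Q. \<delta> q q' \<in> Q) \<and>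
        (\<forall>w. w \<noteq> [] \<longrightarrow>
           (w \<in> L \<longleftrightarrow> oca_state \<delta> sh Inl w (length w) (length w) \<in> Qacc)))}"

end

theory Submission
  imports Defs
begin

lemma suc_pow: "p \<le> n \<Longrightarrow> (suc_w n ^^ k) p = min (p + k) n"
  by (induction k) (auto simp: suc_w_def)

lemma pred_pow: "1 \<le> p \<Longrightarrow> (pred_w ^^ k) p = max (p - k) 1"
  by (induction k) (auto simp: pred_w_def)

lemma shift_pos: "p \<le> n \<Longrightarrow> 0 \<le> a \<Longrightarrow> shift n p a = min (p + nat a) n"
  by (simp add: shift_def suc_pow)

lemma shift_neg: "1 \<le> p \<Longrightarrow> a < 0 \<Longrightarrow> shift n p a = max (p - nat (-a)) 1"
  by (simp add: shift_def pred_pow)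

lemma minus_eq: "1 \<le> y \<Longrightarrow> minus_w y b = max (y - b) 1"
  by (simp add: minus_w_def pred_pow)

lemma shift_range: "1 \<le> p \<Longrightarrow> p \<le> n \<Longrightarrow> 1 \<le> shift n p a \<and> shift n p a \<le> n"
  by (cases "0 \<le> a") (auto simp: shift_pos shift_neg)

lemma shift_nat: "p \<le> n \<Longrightarrow> shift n p (int a) = min (p + a) n"
  by (simp add: shift_pos)


definition basic :: "'s list \<Rightarrow> nat \<Rightarrow> nat \<Rightarrow> 's hlit list \<Rightarrow> bool" where
  "basic w x y ls = (\<forall>l\<in>set ls. hlit_holds w (\<lambda>_ _ _. True) x y l)"

definition rels_ok :: "(nat \<Rightarrow> nat \<Rightarrow> nat \<Rightarrow> bool) \<Rightarrow> nat \<Rightarrow> nat \<Rightarrow> nat \<Rightarrow> 's hlit list \<Rightarrow> bool" where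
  "rels_ok I n x y ls = (\<forall>S a b. RLit S a b \<in> set ls \<longrightarrow> I S (shift n x (int a)) (minus_w y b))"

inductive lm :: "'s incl_horn \<Rightarrow> 's list \<Rightarrow> nat \<Rightarrow> nat \<Rightarrow> nat \<Rightarrow> bool" for \<Phi> :: "'s incl_horn" and w :: "'s list" where
  lmI: "(ls, HRel R) \<in> set \<Phi> \<Longrightarrow> 1 \<le> x \<Longrightarrow> x \<le> y \<Longrightarrow> y \<le> length w \<Longrightarrow> basic w x y ls \<Longrightarrow>
    (\<forall>S a b. RLit S a b \<in> set ls \<longrightarrow> lm \<Phi> w S (shift (length w) x (int a)) (minus_w y b)) \<Longrightarrow> lm \<Phi> w R x y"

lemma hlit_split: "hlit_holds w I x y l \<longleftrightarrow> hlit_holds w (\<lambda>_ _ _. True) x y l \<and>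
   (\<forall>S a b. l = RLit S a b \<longrightarrow> I S (shift (length w) x (int a)) (minus_w y b))"
  by (cases l) auto

lemma hlits_split: "(\<forall>l\<in>set ls. hlit_holds w I x y l) \<longleftrightarrow> basic w x y ls \<and> rels_ok I (length w) x y ls"
  unfolding basic_def rels_ok_def using hlit_split[of w I x y] by blast

definition viol :: "'s incl_horn \<Rightarrow> 's list \<Rightarrow> nat \<Rightarrow> nat \<Rightarrow> bool" where
  "viol \<Phi> w x y = (1 \<le> x \<and> x \<le> y \<and> y \<le> length w \<and>
     (\<exists>ls. (ls, HBot) \<in> set \<Phi> \<and> basic w x y ls \<and> rels_ok (lm \<Phi> w) (length w) x y ls))"

lemma lm_range: "lm \<Phi> w R x y \<Longrightarrow> 1 \<le> x \<and> x \<le> y \<and> y \<le> length w"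
  by (induction rule: lm.induct) auto

lemma lm_head: "lm \<Phi> w R x y \<Longrightarrow> R \<in> {R. \<exists>ls. (ls, HRel R) \<in> set \<Phi>}"
  by (induction rule: lm.induct) auto

lemma lm_sub_I:
  assumes "\<forall>x y. 1 \<le> x \<and> x \<le> length w \<and> 1 \<le> y \<and> y \<le> length w \<longrightarrow> (\<forall>C \<in> set \<Phi>. hclause_holds w I x y C)"
  shows "lm \<Phi> w R x y \<Longrightarrow> I R x y"
proof (induction rule: lm.induct)
  case (lmI ls R x y)
  have "rels_ok I (length w) x y ls" using lmI.IH unfolding rels_ok_def by blast
  then have "\<forall>l\<in>set ls. hlit_holds w I x y l" using lmI.hyps hlits_split by blast
  moreover have "hclause_holds w I x y (ls, HRel R)" using assms lmI.hyps by auto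
  ultimately show ?case using lmI.hyps unfolding hclause_holds_def by auto
qed

lemma rels_ok_mono: "rels_ok I n x y ls \<Longrightarrow> (\<And>S p q. I S p q \<Longrightarrow> J S p q) \<Longrightarrow> rels_ok J n x y ls"
  unfolding rels_ok_def by blast

lemma models_iff: "incl_horn_models w \<Phi> \<longleftrightarrow> \<not>(\<exists>x y. viol \<Phi> w x y)"
proof
  assume "incl_horn_models w \<Phi>"
  then obtain I where I: "\<forall>x y. 1 \<le> x \<and> x \<le> length w \<and> 1 \<le> y \<and> y \<le> length w \<longrightarrow> (\<forall>C \<in> set \<Phi>. hclause_holds w I x y C)"
    unfolding incl_horn_models_def by blast
  show "\<not>(\<exists>x y. viol \<Phi> w x y)"
  proof
    assume "\<exists>x y. viol \<Phi> w x y"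
    then obtain x y ls where v: "1 \<le> x" "x \<le> y" "y \<le> length w" "(ls, HBot) \<in> set \<Phi>" "basic w x y ls"
      "rels_ok (lm \<Phi> w) (length w) x y ls" unfolding viol_def by blast
    have "rels_ok I (length w) x y ls" using rels_ok_mono[OF v(6)] lm_sub_I[OF I] by blast
    then have "\<forall>l\<in>set ls. hlit_holds w I x y l" using v hlits_split by blast
    moreover have "hclause_holds w I x y (ls, HBot)" using I v by auto
    ultimately show False using v unfolding hclause_holds_def by auto
  qed
next
  assume nv: "\<not>(\<exists>x y. viol \<Phi> w x y)"
  show "incl_horn_models w \<Phi>"
    unfolding incl_horn_models_def
  proof (intro exI[of _ "lm \<Phi> w"] allI impI ballI)
    fix x y C
    assume r: "1 \<le> x \<and> x \<le> length w \<and> 1 \<le> y \<and> y \<le> length w" and C: "C \<in> set \<Phi>"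
    obtain ls h where Ch: "C = (ls, h)" by (cases C)
    show "hclause_holds w (lm \<Phi> w) x y C"
      unfolding hclause_holds_def
    proof
      assume a: "x \<le> y \<and> (\<forall>l\<in>set (fst C). hlit_holds w (lm \<Phi> w) x y l)"
      then have "\<forall>l\<in>set ls. hlit_holds w (lm \<Phi> w) x y l" using Ch by auto
      then have b: "basic w x y ls" "rels_ok (lm \<Phi> w) (length w) x y ls" using hlits_split by blast+
      show "hhead_holds (lm \<Phi> w) x y (snd C)"
      proof (cases h)
        case (HRel R)
        then show ?thesis using Ch C b r a lm.lmI[of ls R \<Phi> x y w] unfolding rels_ok_def by auto
      next
        case HBot
        then show ?thesis using Ch C b r a nv unfolding viol_def by auto
      qed
    qed
  qed
qed

lemma lm_transfer:
  assumes H0: "\<And>x y. (x,y) \<in> P \<Longrightarrow> 1 \<le> f x \<and> f x \<le> f y \<and> f y \<le> length w'"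
  and H1: "\<And>x y ls h. (x,y) \<in> P \<Longrightarrow> (ls,h) \<in> set \<Phi> \<Longrightarrow> basic w x y ls \<Longrightarrow> basic w' (f x) (f y) ls"
  and H3: "\<And>x y ls h S a b. (x,y) \<in> P \<Longrightarrow> (ls,h) \<in> set \<Phi> \<Longrightarrow> basic w x y ls \<Longrightarrow> RLit S a b \<in> set ls \<Longrightarrow>
       shift (length w') (f x) (int a) = f (shift (length w) x (int a)) \<and> minus_w (f y) b = f (minus_w y b)"
  and H2: "\<And>x y ls h S a b. (x,y) \<in> P \<Longrightarrow> (ls,h) \<in> set \<Phi> \<Longrightarrow> basic w x y ls \<Longrightarrow> RLit S a b \<in> set ls \<Longrightarrow>
       (shift (length w) x (int a), minus_w y b) \<notin> P \<Longrightarrow> lm \<Phi> w S (shift (length w) x (int a)) (minus_w y b) \<Longrightarrow>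
       lm \<Phi> w' S (f (shift (length w) x (int a))) (f (minus_w y b))"
  shows "lm \<Phi> w R x y \<Longrightarrow> (x,y) \<in> P \<Longrightarrow> lm \<Phi> w' R (f x) (f y)"
proof (induction rule: lm.induct)
  case (lmI ls R x y)
  show ?case
  proof (rule lm.lmI[OF lmI.hyps(1)])
    show "1 \<le> f x" "f x \<le> f y" "f y \<le> length w'" using H0[OF lmI.prems] by auto
    show "basic w' (f x) (f y) ls" using H1[OF lmI.prems lmI.hyps(1) lmI.hyps(5)] .
    show "\<forall>S a b. RLit S a b \<in> set ls \<longrightarrow> lm \<Phi> w' S (shift (length w') (f x) (int a)) (minus_w (f y) b)"
    proof (intro allI impI)
      fix S a b assume Sab: "RLit S a b \<in> set ls"
      have e: "shift (length w') (f x) (int a) = f (shift (length w) x (int a)) \<and> minus_w (f y) b = f (minus_w y b)"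
        using H3[OF lmI.prems lmI.hyps(1) lmI.hyps(5) Sab] .
      have l: "lm \<Phi> w S (shift (length w) x (int a)) (minus_w y b)" using lmI.IH Sab by blast
      show "lm \<Phi> w' S (shift (length w') (f x) (int a)) (minus_w (f y) b)"
      proof (cases "(shift (length w) x (int a), minus_w y b) \<in> P")
        case True
        then show ?thesis using lmI.IH Sab e by auto
      next
        case False
        then show ?thesis using H2[OF lmI.prems lmI.hyps(1) lmI.hyps(5) Sab False l] e by auto
      qed
    qed
  qed
qed


lemma trellis_from_F:
  fixes L :: "('s::finite) list set" and F :: "'s list \<Rightarrow> 'd"
  assumes Lne: "L \<subseteq> {w. w \<noteq> []}"
  and fin: "finite (F ` {u. u \<noteq> []})"
  and cong: "\<And>u u'. 2 \<le> length u \<Longrightarrow> 2 \<le> length u' \<Longrightarrow> F (butlast u) = F (butlast u') \<Longrightarrow> F (tl u) = F (tl u') \<Longrightarrow> F u = F u'"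
  and resp: "\<And>w w'. w \<noteq> [] \<Longrightarrow> w' \<noteq> [] \<Longrightarrow> F w = F w' \<Longrightarrow> w \<in> L \<Longrightarrow> w' \<in> L"
  shows "L \<in> Trellis"
proof -
  define D where "D = F ` {u. u \<noteq> []}"
  define N where "N = card D"
  obtain h where h: "bij_betw h {0..<N} D" using ex_bij_betw_nat_finite[OF fin] unfolding D_def N_def by blast
  define val where "val q = (case q of Inl a \<Rightarrow> F [a] | Inr i \<Rightarrow> h i)" for q :: "'s + nat"
  define step where "step d e = F (SOME u. 2 \<le> length u \<and> F (butlast u) = d \<and> F (tl u) = e)" for d e
  define enc where "enc d = inv_into {0..<N} h d" for d
  define \<delta> :: "'s + nat \<Rightarrow> 's + nat \<Rightarrow> 's + nat" where "\<delta> p q = (if step (val p) (val q) \<in> D then Inr (enc (step (val p) (val q))) else Inr 0)" for p q :: "'s + nat"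
  define Q :: "('s + nat) set" where "Q = range Inl \<union> Inr ` {0..<N}"
  define sh :: "'s + nat" where "sh = Inr N"
  define Qacc where "Qacc = {q \<in> Q. \<exists>w\<in>L. val q = F w}"
  have Dne: "F [undefined] \<in> D" unfolding D_def by auto
  then have Npos: "0 < N" unfolding N_def using fin D_def card_gt_0_iff by blast
  have encD: "z \<in> D \<Longrightarrow> enc z \<in> {0..<N} \<and> h (enc z) = z" for z
    unfolding enc_def using h by (metis bij_betw_def bij_betw_inv_into_right inv_into_into)
  have \<delta>I: "\<And>p q. step (val p) (val q) \<in> D \<Longrightarrow> \<delta> p q = Inr (enc (step (val p) (val q)))"
    unfolding \<delta>_def by simp
  have \<delta>Q: "\<delta> p q \<in> Q" for p q unfolding \<delta>_def Q_def using encD Npos by auto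
  have inv: "\<And>c. Suc t \<le> c \<Longrightarrow> c \<le> length w \<Longrightarrow> oca_state \<delta> sh Inl w c (Suc t) \<in> Q \<and>
      val (oca_state \<delta> sh Inl w c (Suc t)) = F (take (Suc t) (drop (c - Suc t) w))" for w t
  proof (induction t)
    case 0
    then have "take (Suc 0) (drop (c - Suc 0) w) = [w ! (c - 1)]"
      by (simp add: take_Suc_conv_app_nth)
    then show ?case using 0 unfolding Q_def val_def by auto
  next
    case (Suc t)
    define u where "u = take (Suc (Suc t)) (drop (c - Suc (Suc t)) w)"
    have lu: "length u = Suc (Suc t)" unfolding u_def using Suc.prems by auto
    have bu: "butlast u = take (Suc t) (drop (c - 1 - Suc t) w)"
      unfolding u_def using Suc.prems by (simp add: butlast_take)
    have tu: "tl u = take (Suc t) (drop (c - Suc t) w)"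
    proof -
      have "c - Suc t = Suc (c - Suc (Suc t))" using Suc.prems by simp
      then show ?thesis unfolding u_def by (simp add: tl_take tl_drop drop_Suc)
    qed
    have IH1: "val (oca_state \<delta> sh Inl w (c - 1) (Suc t)) = F (butlast u)"
      using Suc.IH[of "c - 1"] Suc.prems bu by auto
    have IH2: "val (oca_state \<delta> sh Inl w c (Suc t)) = F (tl u)"
      using Suc.IH[of c] Suc.prems tu by auto
    have ex: "\<exists>u'. 2 \<le> length u' \<and> F (butlast u') = F (butlast u) \<and> F (tl u') = F (tl u)"
      using lu by (intro exI[of _ u]) auto
    have st: "step (F (butlast u)) (F (tl u)) = F u"
      unfolding step_def using someI_ex[OF ex] cong lu by (metis (no_types, lifting) le_add2 add_2_eq_Suc')
    have uD: "F u \<in> D" unfolding D_def using lu by auto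
    have os: "oca_state \<delta> sh Inl w c (Suc (Suc t)) = \<delta> (oca_state \<delta> sh Inl w (c - 1) (Suc t)) (oca_state \<delta> sh Inl w c (Suc t))"
      using Suc.prems by simp
    have e: "oca_state \<delta> sh Inl w c (Suc (Suc t)) = Inr (enc (F u))"
      unfolding os using \<delta>I IH1 IH2 st uD by metis
    have "val (Inr (enc (F u))) = F u" using encD uD unfolding val_def by simp
    then show ?case unfolding e using \<delta>Q e u_def by (metis os)
  qed
  have A1: "finite Q" unfolding Q_def by simp
  have A2: "range Inl \<subseteq> Q" unfolding Q_def by auto
  have A3: "sh \<notin> Q" unfolding Q_def sh_def by auto
  have A4: "Qacc \<subseteq> Q" unfolding Qacc_def by auto
  have A5: "\<forall>q\<in>insert sh Q. \<forall>q'\<in>Q. \<delta> q q' \<in> Q" using \<delta>Q by auto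
  have A6: "\<forall>w. w \<noteq> [] \<longrightarrow> (w \<in> L) = (oca_state \<delta> sh Inl w (length w) (length w) \<in> Qacc)"
  proof (intro allI impI)
    fix w :: "'s list" assume wne: "w \<noteq> []"
    then obtain t where t: "length w = Suc t" by (cases w) auto
    have i: "oca_state \<delta> sh Inl w (length w) (length w) \<in> Q \<and> val (oca_state \<delta> sh Inl w (length w) (length w)) = F w"
      using inv[of t "length w" w] t by simp
    show "(w \<in> L) = (oca_state \<delta> sh Inl w (length w) (length w) \<in> Qacc)"
    proof
      assume "w \<in> L" then show "oca_state \<delta> sh Inl w (length w) (length w) \<in> Qacc"
        unfolding Qacc_def using i by blast
    next
      assume "oca_state \<delta> sh Inl w (length w) (length w) \<in> Qacc"
      then obtain w' where "w' \<in> L" "F w = F w'" unfolding Qacc_def using i by auto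
      then show "w \<in> L" using resp[of w' w] wne Lne by auto
    qed
  qed
  show ?thesis
    unfolding Trellis_def mem_Collect_eq
    apply (rule conjI[OF Lne])
    apply (rule exI[of _ Q], rule exI[of _ Qacc], rule exI[of _ sh], rule exI[of _ \<delta>])
    using A1 A2 A3 A4 A5 A6 by simp
qed


lemma oca_in_Q:
  assumes cl: "\<forall>q \<in> insert sh Q. \<forall>q' \<in> Q. \<delta> q q' \<in> Q" and inl: "range Inl \<subseteq> Q"
  shows "\<forall>c. oca_state \<delta> sh Inl w c (Suc t) \<in> insert sh Q \<and> (1 \<le> c \<and> c \<le> length w \<longrightarrow> oca_state \<delta> sh Inl w c (Suc t) \<in> Q)"
proof (induction t)
  case 0
  then show ?case using inl by auto
next
  case (Suc t)
  show ?case
  proof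
    fix c
    show "oca_state \<delta> sh Inl w c (Suc (Suc t)) \<in> insert sh Q \<and> (1 \<le> c \<and> c \<le> length w \<longrightarrow> oca_state \<delta> sh Inl w c (Suc (Suc t)) \<in> Q)"
    proof (cases "1 \<le> c \<and> c \<le> length w")
      case True
      have "oca_state \<delta> sh Inl w (c - 1) (Suc t) \<in> insert sh Q" "oca_state \<delta> sh Inl w c (Suc t) \<in> Q"
        using Suc True by auto
      then have "\<delta> (oca_state \<delta> sh Inl w (c - 1) (Suc t)) (oca_state \<delta> sh Inl w c (Suc t)) \<in> Q"
        using cl by blast
      then show ?thesis using True by simp
    next
      case False
      then show ?thesis by auto
    qed
  qed
qed

lemma trellis_to_horn:
  fixes L :: "('s::finite) list set"
  assumes "L \<in> Trellis"
  shows "L \<in> incl_ESO_HORN"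
proof -
  obtain Q Qacc sh \<delta> where Lne: "L \<subseteq> {w. w \<noteq> []}" and fQ: "finite (Q :: ('s + nat) set)" and inl: "range Inl \<subseteq> Q"
    and shQ: "sh \<notin> Q" and acc: "Qacc \<subseteq> Q" and cl: "\<forall>q \<in> insert sh Q. \<forall>q' \<in> Q. \<delta> q q' \<in> Q"
    and memb: "\<forall>w. w \<noteq> [] \<longrightarrow> (w \<in> L \<longleftrightarrow> oca_state \<delta> sh Inl w (length w) (length w) \<in> Qacc)"
    using assms unfolding Trellis_def mem_Collect_eq
    apply (elim conjE exE)
    subgoal for Q Qacc sh \<delta>
      apply (rule that[of Q sh Qacc \<delta>])
      by assumption+
    done
  obtain qs where qs: "set qs = Q" using finite_list[OF fQ] by blast
  obtain ss :: "'s list" where ss: "set ss = UNIV" using finite_list[OF finite_UNIV[where 'a='s]] by blast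
  obtain idx :: "'s + nat \<Rightarrow> nat" where idx: "inj_on idx Q"
    using finite_imp_inj_to_nat_seg[OF fQ] by blast
  define C1 :: "'s \<Rightarrow> 's hclause" where "C1 s = ([XeqY, ULit True (Qs s) VX 0], HRel (idx (Inl s)))" for s :: 's
  define C2 :: "'s + nat \<Rightarrow> 's + nat \<Rightarrow> 's hclause" where "C2 p q = ([XltY, RLit (idx p) 0 1, RLit (idx q) 1 0], HRel (idx (\<delta> p q)))" for p q
  define C3 :: "'s + nat \<Rightarrow> 's hclause" where "C3 q = ([ULit True MinP VX 0, ULit True MaxP VY 0, RLit (idx q) 0 0], HBot)" for q
  define \<Phi> :: "'s incl_horn" where "\<Phi> = map C1 ss @ concat (map (\<lambda>p. map (C2 p) qs) qs) @ map C3 (filter (\<lambda>q. q \<notin> Qacc) qs)"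
  have inQ: "1 \<le> c \<Longrightarrow> c \<le> length w \<Longrightarrow> oca_state \<delta> sh Inl w c (Suc t) \<in> Q" for w c t
    using oca_in_Q[OF cl inl, of w t] by blast
  have relcl: "(ls, HRel R) \<in> set \<Phi> \<Longrightarrow> (\<exists>s. (ls, HRel R) = C1 s) \<or> (\<exists>p\<in>Q. \<exists>q\<in>Q. (ls, HRel R) = C2 p q)" for ls R
    unfolding \<Phi>_def C3_def using qs by auto
  have botcl: "(ls, HBot) \<in> set \<Phi> \<longleftrightarrow> (\<exists>q\<in>Q. q \<notin> Qacc \<and> (ls, HBot) = C3 q)" for ls
    unfolding \<Phi>_def C1_def C2_def using qs by auto
  have C1in: "C1 s \<in> set \<Phi>" for s unfolding \<Phi>_def using ss by auto
  have C2in: "p \<in> Q \<Longrightarrow> q \<in> Q \<Longrightarrow> C2 p q \<in> set \<Phi>" for p q unfolding \<Phi>_def using qs by auto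
  have st_step: "x < y \<Longrightarrow> y \<le> length w \<Longrightarrow> 1 \<le> x \<Longrightarrow> oca_state \<delta> sh Inl w y (Suc (y - x)) =
      \<delta> (oca_state \<delta> sh Inl w (y - 1) (Suc (y - 1 - x))) (oca_state \<delta> sh Inl w y (Suc (y - (x + 1))))" for x y w
  proof -
    assume a: "x < y" "y \<le> length w" "1 \<le> x"
    then have e: "Suc (y - x) = Suc (Suc (y - x - 1))" by simp
    have "y - 1 - x = y - x - 1" "y - (x + 1) = y - x - 1" by auto
    then show ?thesis unfolding e using a by simp
  qed
  have lm_char: "lm \<Phi> w R x y \<longleftrightarrow> 1 \<le> x \<and> x \<le> y \<and> y \<le> length w \<and> R = idx (oca_state \<delta> sh Inl w y (Suc (y - x)))" for w R x y
  proof
    assume "lm \<Phi> w R x y"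
    then show "1 \<le> x \<and> x \<le> y \<and> y \<le> length w \<and> R = idx (oca_state \<delta> sh Inl w y (Suc (y - x)))"
    proof (induction rule: lm.induct)
      case (lmI ls R x y)
      from relcl[OF lmI.hyps(1)] show ?case
      proof
        assume "\<exists>s. (ls, HRel R) = C1 s"
        then obtain s where s: "ls = [XeqY, ULit True (Qs s) VX 0]" "R = idx (Inl s)" unfolding C1_def by auto
        have "x = y" "w ! (x - 1) = s" using lmI.hyps(5) lmI.hyps(4) lmI.hyps(3) unfolding s basic_def
          by (auto simp: shift_pos upred_holds_def)
        then show ?thesis using lmI.hyps s by auto
      next
        assume "\<exists>p\<in>Q. \<exists>q\<in>Q. (ls, HRel R) = C2 p q"
        then obtain p q where pq: "p \<in> Q" "q \<in> Q" "ls = [XltY, RLit (idx p) 0 1, RLit (idx q) 1 0]" "R = idx (\<delta> p q)"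
          unfolding C2_def by auto
        have xy: "x < y" using lmI.hyps(5) unfolding pq basic_def by auto
        have m1: "minus_w y 1 = y - 1" using xy lmI.hyps(2) by (simp add: minus_eq)
        have s0: "shift (length w) x (int 0) = x" using lmI.hyps by (simp add: shift_pos)
        have s1: "shift (length w) x (int 1) = x + 1" using lmI.hyps xy by (simp add: shift_pos)
        have m0: "minus_w y 0 = y" by (simp add: minus_w_def)
        have "idx p = idx (oca_state \<delta> sh Inl w (y - 1) (Suc (y - 1 - x)))"
          using lmI.IH pq(3) m1 s0 by fastforce
        then have pe: "p = oca_state \<delta> sh Inl w (y - 1) (Suc (y - 1 - x))"
        proof -
          have "oca_state \<delta> sh Inl w (y - 1) (Suc (y - 1 - x)) \<in> Q" using inQ[of "y - 1" w] xy lmI.hyps by simp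
          then show ?thesis using idx pq(1) \<open>idx p = _\<close> by (meson inj_onD)
        qed
        have "idx q = idx (oca_state \<delta> sh Inl w y (Suc (y - (x + 1))))"
          using lmI.IH pq(3) m0 s1 by fastforce
        then have qe: "q = oca_state \<delta> sh Inl w y (Suc (y - (x + 1)))"
        proof -
          have "oca_state \<delta> sh Inl w y (Suc (y - (x + 1))) \<in> Q" using inQ[of y w] xy lmI.hyps by simp
          then show ?thesis using idx pq(2) \<open>idx q = _\<close> by (meson inj_onD)
        qed
        show ?thesis using lmI.hyps xy pq(4) pe qe st_step by auto
      qed
    qed
  next
    assume a: "1 \<le> x \<and> x \<le> y \<and> y \<le> length w \<and> R = idx (oca_state \<delta> sh Inl w y (Suc (y - x)))"
    have "\<forall>x y. y - x = k \<longrightarrow> 1 \<le> x \<and> x \<le> y \<and> y \<le> length w \<longrightarrow> lm \<Phi> w (idx (oca_state \<delta> sh Inl w y (Suc (y - x)))) x y" for k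
    proof (induction k)
      case 0
      show ?case
      proof (intro allI impI)
        fix x y assume "y - x = 0" "1 \<le> x \<and> x \<le> y \<and> y \<le> length w"
        then have xy: "x = y" "1 \<le> x" "y \<le> length w" by auto
        show "lm \<Phi> w (idx (oca_state \<delta> sh Inl w y (Suc (y - x)))) x y"
          unfolding \<open>x = y\<close>
          using xy apply (simp)
          apply (rule lm.lmI[OF C1in[of "w ! (y - Suc 0)", unfolded C1_def]])
          using xy by (auto simp: basic_def shift_pos upred_holds_def)
      qed
    next
      case (Suc k)
      show ?case
      proof (intro allI impI)
        fix x y assume k: "y - x = Suc k" "1 \<le> x \<and> x \<le> y \<and> y \<le> length w"
        then have xy: "x < y" "1 \<le> x" "y \<le> length w" by auto
        define p where "p = oca_state \<delta> sh Inl w (y - 1) (Suc (y - 1 - x))"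
        define q where "q = oca_state \<delta> sh Inl w y (Suc (y - (x + 1)))"
        have pQ: "p \<in> Q" unfolding p_def using xy inQ by auto
        have qQ: "q \<in> Q" unfolding q_def using xy inQ by auto
        have m1: "minus_w y 1 = y - 1" using xy by (simp add: minus_eq)
        have s0: "shift (length w) x (int 0) = x" using xy by (simp add: shift_pos)
        have s1: "shift (length w) x (int 1) = x + 1" using xy by (simp add: shift_pos)
        have m0: "minus_w y 0 = y" by (simp add: minus_w_def)
        have IHi: "\<And>x' y'. y' - x' = k \<Longrightarrow> 1 \<le> x' \<Longrightarrow> x' \<le> y' \<Longrightarrow> y' \<le> length w \<Longrightarrow>
           lm \<Phi> w (idx (oca_state \<delta> sh Inl w y' (Suc (y' - x')))) x' y'" using Suc.IH by blast
        have lp: "lm \<Phi> w (idx p) x (y - 1)" unfolding p_def by (rule IHi) (use xy k in auto)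
        have lq: "lm \<Phi> w (idx q) (x + 1) y" unfolding q_def by (rule IHi) (use xy k in auto)
        show "lm \<Phi> w (idx (oca_state \<delta> sh Inl w y (Suc (y - x)))) x y"
          unfolding st_step[OF xy(1) xy(3) xy(2)] p_def[symmetric] q_def[symmetric]
          apply (rule lm.lmI[OF C2in[OF pQ qQ, unfolded C2_def]])
          using xy lp lq m1 s0 s1 m0
          by (auto simp: basic_def)
      qed
    qed
    then show "lm \<Phi> w R x y" using a by blast
  qed
  have viol_char: "viol \<Phi> w x y \<longleftrightarrow> x = 1 \<and> y = length w \<and> 1 \<le> length w \<and> oca_state \<delta> sh Inl w y (Suc (y - x)) \<notin> Qacc" for w x y
  proof
    assume "viol \<Phi> w x y"
    then obtain ls where v: "1 \<le> x" "x \<le> y" "y \<le> length w" "(ls, HBot) \<in> set \<Phi>" "basic w x y ls" "rels_ok (lm \<Phi> w) (length w) x y ls"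
      unfolding viol_def by blast
    then obtain q where q: "q \<in> Q" "q \<notin> Qacc" "ls = [ULit True MinP VX 0, ULit True MaxP VY 0, RLit (idx q) 0 0]"
      using botcl unfolding C3_def by auto
    have xy: "x = 1" "y = length w" using v(5) v(1-3) unfolding q basic_def by (auto simp: shift_pos upred_holds_def)
    have "lm \<Phi> w (idx q) x y" using v(6) v(1-3) unfolding q rels_ok_def by (auto simp: shift_pos minus_w_def)
    then have "idx q = idx (oca_state \<delta> sh Inl w y (Suc (y - x)))" using lm_char by blast
    moreover have "oca_state \<delta> sh Inl w y (Suc (y - x)) \<in> Q" using inQ v by simp
    ultimately have "q = oca_state \<delta> sh Inl w y (Suc (y - x))" using idx q(1) by (meson inj_onD)
    then show "x = 1 \<and> y = length w \<and> 1 \<le> length w \<and> oca_state \<delta> sh Inl w y (Suc (y - x)) \<notin> Qacc"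
      using xy q v by auto
  next
    assume a: "x = 1 \<and> y = length w \<and> 1 \<le> length w \<and> oca_state \<delta> sh Inl w y (Suc (y - x)) \<notin> Qacc"
    define q where "q = oca_state \<delta> sh Inl w y (Suc (y - x))"
    have qQ: "q \<in> Q" unfolding q_def using a inQ by auto
    have l: "lm \<Phi> w (idx q) x y" using lm_char a q_def by auto
    show "viol \<Phi> w x y"
      unfolding viol_def
      apply (intro conjI exI[of _ "[ULit True MinP VX 0, ULit True MaxP VY 0, RLit (idx q) 0 0]"])
      using a botcl[of "[ULit True MinP VX 0, ULit True MaxP VY 0, RLit (idx q) 0 0]"] qQ q_def l
      by (auto simp: C3_def basic_def rels_ok_def shift_pos upred_holds_def minus_w_def)
  qed
  have "L = incl_horn_lang \<Phi>"
  proof (rule set_eqI)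
    fix w :: "'s list"
    show "w \<in> L \<longleftrightarrow> w \<in> incl_horn_lang \<Phi>"
    proof (cases "w = []")
      case True then show ?thesis using Lne unfolding incl_horn_lang_def by auto
    next
      case False
      then have "Suc (length w - 1) = length w" "1 \<le> length w" by (cases w, auto)+
      then have "incl_horn_models w \<Phi> \<longleftrightarrow> oca_state \<delta> sh Inl w (length w) (length w) \<in> Qacc"
        unfolding models_iff using viol_char False by auto
      then show ?thesis using memb False unfolding incl_horn_lang_def by auto
    qed
  qed
  then show ?thesis unfolding incl_ESO_HORN_def by blast
qed


fun litoff :: "'s hlit \<Rightarrow> nat" where
  "litoff (ULit _ _ _ a) = nat \<bar>a\<bar>"
| "litoff (RLit _ a b) = max a b"
| "litoff _ = 0"

definition offA :: "'s incl_horn \<Rightarrow> nat" where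
  "offA \<Phi> = sum_list (map litoff (concat (map fst \<Phi>)))"

lemma off_le: "(ls, h) \<in> set \<Phi> \<Longrightarrow> l \<in> set ls \<Longrightarrow> litoff l \<le> offA \<Phi>"
proof -
  assume a: "(ls, h) \<in> set \<Phi>" "l \<in> set ls"
  have "litoff l \<in> set (map litoff (concat (map fst \<Phi>)))" using a by force
  then show ?thesis unfolding offA_def by (rule member_le_sum_list) simp
qed

lemma minus_shift: "1 \<le> y \<Longrightarrow> y \<le> n \<Longrightarrow> minus_w y b = shift n y (- int b)"
proof (cases "b = 0")
  case True
  assume "1 \<le> y" "y \<le> n"
  then show ?thesis using True by (simp add: minus_w_def shift_pos)
next
  case False
  assume "1 \<le> y" "y \<le> n"
  then show ?thesis using False by (simp add: shift_neg minus_eq)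
qed

lemma pos_num:
  assumes "d < s" "s \<le> p" "p \<le> t" "t + e \<le> n" and dc: "d = 0 \<or> d + A + 1 < s" and ec: "e = 0 \<or> t + A + 1 + e \<le> n"
  and a: "nat \<bar>a\<bar> \<le> A"
  shows "d < shift n p a \<and> shift n p a + e \<le> n \<and> shift (n - e - d) (p - d) a = shift n p a - d \<and>
     (d = 0 \<or> d + 2 \<le> shift n p a) \<and> (e = 0 \<or> shift n p a + e < n)"
proof (cases "0 \<le> a")
  case True
  have h1: "shift n p a = min (p + nat a) n" using assms True by (simp add: shift_pos)
  have h2: "shift (n - e - d) (p - d) a = min (p - d + nat a) (n - e - d)" using assms True by (simp add: shift_pos)
  show ?thesis unfolding h1 h2 using assms True by (auto simp: min_def)
next
  case False
  have h1: "shift n p a = max (p - nat (-a)) 1" using assms False by (simp add: shift_neg)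
  have h2: "shift (n - e - d) (p - d) a = max (p - d - nat (-a)) 1" using assms False by (simp add: shift_neg)
  show ?thesis unfolding h1 h2 using assms False by (auto simp: max_def)
qed

lemma upred_window:
  assumes "d < q" "q + e \<le> length v" "d = 0 \<or> d + 2 \<le> q" "e = 0 \<or> q + e < length v"
    "length v2 = length v - e - d" "\<And>i. i + d < length v - e \<Longrightarrow> v2 ! i = v ! (i + d)"
  shows "upred_holds v U q \<longleftrightarrow> upred_holds v2 U (q - d)"
proof -
  have "v2 ! (q - d - 1) = v ! (q - 1)" using assms(6)[of "q - d - 1"] assms(1,2) by auto
  then show ?thesis using assms(1-5) by (cases U) (auto simp: upred_holds_def)
qed

locale hctx =
  fixes \<Phi> :: "('s::finite) incl_horn"
begin

abbreviation "A \<equiv> offA \<Phi>"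
abbreviation "K \<equiv> offA \<Phi> + 1"

lemma basic_window:
  assumes v2: "v2 = drop d (take (length v - e) v)" and st: "1 \<le> s" "d < s" "s \<le> t" "t + e \<le> length v"
  and dc: "d = 0 \<or> d + K < s" and ec: "e = 0 \<or> t + K + e \<le> length v"
  and xy: "s \<le> x" "x \<le> t" "s \<le> y" "y \<le> t" and C: "(ls, h) \<in> set \<Phi>"
  shows "basic v x y ls \<longleftrightarrow> basic v2 (x - d) (y - d) ls"
    and "\<And>a. RLit S a b \<in> set ls \<Longrightarrow> shift (length v2) (x - d) (int a) = shift (length v) x (int a) - d \<and>
            minus_w (y - d) b = minus_w y b - d \<and> d < shift (length v) x (int a) \<and> d < minus_w y b"
proof -
  have l2: "length v2 = length v - e - d" using v2 st by simp
  have nth2: "\<And>i. i + d < length v - e \<Longrightarrow> v2 ! i = v ! (i + d)" using v2 st by (simp add: add.commute)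
  have PN: "\<And>p a. s \<le> p \<Longrightarrow> p \<le> t \<Longrightarrow> nat \<bar>a\<bar> \<le> A \<Longrightarrow> d < shift (length v) p a \<and> shift (length v) p a + e \<le> length v \<and>
      shift (length v2) (p - d) a = shift (length v) p a - d \<and>
     (d = 0 \<or> d + 2 \<le> shift (length v) p a) \<and> (e = 0 \<or> shift (length v) p a + e < length v)"
    using pos_num[of d s _ t e "length v" A] st dc ec l2 by (simp add: add.assoc)
  have UP: "\<And>p a U. s \<le> p \<Longrightarrow> p \<le> t \<Longrightarrow> nat \<bar>a\<bar> \<le> A \<Longrightarrow>
      upred_holds v U (shift (length v) p a) \<longleftrightarrow> upred_holds v2 U (shift (length v2) (p - d) a)"
  proof -
    fix p a U assume "s \<le> p" "p \<le> t" "nat \<bar>a\<bar> \<le> A"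
    note P = PN[OF this]
    show "upred_holds v U (shift (length v) p a) \<longleftrightarrow> upred_holds v2 U (shift (length v2) (p - d) a)"
      using upred_window[of d "shift (length v) p a" e v v2 U] P l2 nth2 by auto
  qed
  have rng: "1 \<le> x" "x \<le> length v" "1 \<le> y" "y \<le> length v" "1 \<le> x - d" "x - d \<le> length v2" "1 \<le> y - d" "y - d \<le> length v2"
    using st xy l2 by auto
  have MS: "\<And>b. minus_w y b = shift (length v) y (- int b)" "\<And>b. minus_w (y - d) b = shift (length v2) (y - d) (- int b)"
    using minus_shift rng by auto
  have lit: "hlit_holds v (\<lambda>_ _ _. True) x y l \<longleftrightarrow> hlit_holds v2 (\<lambda>_ _ _. True) (x - d) (y - d) l" if l: "l \<in> set ls" for l
  proof -
    have o: "litoff l \<le> A" using off_le[OF C l] .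
    show ?thesis
    proof (cases l)
      case (ULit pos U vv a)
      then show ?thesis using o UP[of x a U] UP[of y a U] xy by (cases vv) auto
    next
      case XeqY
      then show ?thesis using xy st by auto
    next
      case XltY
      then show ?thesis using xy st by auto
    next
      case (RLit S a b)
      have a1: "nat \<bar>int a\<bar> \<le> A" "nat \<bar>- int b\<bar> \<le> A" using o RLit by auto
      show ?thesis using RLit PN[OF xy(1,2) a1(1)] PN[OF xy(3,4) a1(2)] MS by auto
    qed
  qed
  show "basic v x y ls \<longleftrightarrow> basic v2 (x - d) (y - d) ls" unfolding basic_def using lit by blast
  fix a assume R: "RLit S a b \<in> set ls"
  have o: "litoff (RLit S a b) \<le> A" using off_le[OF C R] by simp
  have a1: "nat \<bar>int a\<bar> \<le> A" "nat \<bar>- int b\<bar> \<le> A" using o by auto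
  show "shift (length v2) (x - d) (int a) = shift (length v) x (int a) - d \<and>
            minus_w (y - d) b = minus_w y b - d \<and> d < shift (length v) x (int a) \<and> d < minus_w y b"
    using PN[OF xy(1,2) a1(1)] PN[OF xy(3,4) a1(2)] MS by auto
qed

lemma loc_lm:
  assumes v2: "v2 = drop d (take (length v - e) v)" and st: "1 \<le> s" "d < s" "s \<le> t" "t + e \<le> length v"
  and dc: "d = 0 \<or> d + K < s" and ec: "e = 0 \<or> t + K + e \<le> length v"
  and xy: "s \<le> x" "x \<le> y" "y \<le> t"
  shows "lm \<Phi> v R x y \<longleftrightarrow> lm \<Phi> v2 R (x - d) (y - d)"
proof -
  have l2: "length v2 = length v - e - d" using v2 st by simp
  note BW = basic_window[OF v2 st dc ec]
  show ?thesis
  proof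
    assume lmv: "lm \<Phi> v R x y"
    show "lm \<Phi> v2 R (x - d) (y - d)"
    proof (rule lm_transfer[where P="{(x,y). s \<le> x \<and> x \<le> y \<and> y \<le> t}" and f="\<lambda>p. p - d"])
      show "lm \<Phi> v R x y" by (rule lmv)
      show "(x, y) \<in> {(x, y). s \<le> x \<and> x \<le> y \<and> y \<le> t}" using xy by auto
      fix x y assume "(x, y) \<in> {(x, y). s \<le> x \<and> x \<le> y \<and> y \<le> t}"
      then have P: "s \<le> x" "x \<le> y" "y \<le> t" by auto
      show "1 \<le> x - d \<and> x - d \<le> y - d \<and> y - d \<le> length v2" using P st l2 by auto
      fix ls h assume C: "(ls, h) \<in> set \<Phi>"
      show "basic v x y ls \<Longrightarrow> basic v2 (x - d) (y - d) ls" using BW(1)[OF P(1) _ _ P(3) C] P by auto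
      fix S a b assume b: "basic v x y ls" and R: "RLit S a b \<in> set ls"
      show "shift (length v2) (x - d) (int a) = shift (length v) x (int a) - d \<and> minus_w (y - d) b = minus_w y b - d"
        using BW(2)[OF P(1) _ _ P(3) C R] P by auto
      have "x \<le> shift (length v) x (int a)" "minus_w y b \<le> y" "shift (length v) x (int a) \<le> minus_w y b"
        using P st b R by (auto simp: shift_pos minus_eq basic_def)
      then show "(shift (length v) x (int a), minus_w y b) \<notin> {(x, y). s \<le> x \<and> x \<le> y \<and> y \<le> t} \<Longrightarrow>
         lm \<Phi> v S (shift (length v) x (int a)) (minus_w y b) \<Longrightarrow> lm \<Phi> v2 S (shift (length v) x (int a) - d) (minus_w y b - d)"
        using P by auto
    qed
  next
    assume lmv: "lm \<Phi> v2 R (x - d) (y - d)"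
    have "lm \<Phi> v R (x - d + d) (y - d + d)"
    proof (rule lm_transfer[where P="{(x,y). s - d \<le> x \<and> x \<le> y \<and> y \<le> t - d}" and f="\<lambda>p. p + d"])
      show "lm \<Phi> v2 R (x - d) (y - d)" by (rule lmv)
      show "(x - d, y - d) \<in> {(x, y). s - d \<le> x \<and> x \<le> y \<and> y \<le> t - d}" using xy by auto
      fix x y assume "(x, y) \<in> {(x, y). s - d \<le> x \<and> x \<le> y \<and> y \<le> t - d}"
      then have P: "s \<le> x + d" "x + d \<le> y + d" "y + d \<le> t" "s - d \<le> x" "y \<le> t - d" using st by auto
      show "1 \<le> x + d \<and> x + d \<le> y + d \<and> y + d \<le> length v" using P st by auto
      fix ls h assume C: "(ls, h) \<in> set \<Phi>"
      show "basic v2 x y ls \<Longrightarrow> basic v (x + d) (y + d) ls" using BW(1)[OF P(1) _ _ P(3) C] P by auto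
      fix S a b assume b: "basic v2 x y ls" and R: "RLit S a b \<in> set ls"
      have W: "shift (length v2) x (int a) = shift (length v) (x + d) (int a) - d \<and>
            minus_w y b = minus_w (y + d) b - d \<and> d < shift (length v) (x + d) (int a) \<and> d < minus_w (y + d) b"
        using BW(2)[OF P(1) _ _ P(3) C R] P by auto
      then show "shift (length v) (x + d) (int a) = shift (length v2) x (int a) + d \<and> minus_w (y + d) b = minus_w y b + d"
        by auto
      have "x \<le> shift (length v2) x (int a)" "minus_w y b \<le> y" "shift (length v2) x (int a) \<le> minus_w y b"
        using P st b R l2 by (auto simp: shift_pos minus_eq basic_def)
      then show "(shift (length v2) x (int a), minus_w y b) \<notin> {(x, y). s - d \<le> x \<and> x \<le> y \<and> y \<le> t - d} \<Longrightarrow>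
         lm \<Phi> v2 S (shift (length v2) x (int a)) (minus_w y b) \<Longrightarrow> lm \<Phi> v S (shift (length v2) x (int a) + d) (minus_w y b + d)"
        using P by auto
    qed
    then show "lm \<Phi> v R x y" using xy st by simp
  qed
qed

lemma loc_viol:
  assumes v2: "v2 = drop d (take (length v - e) v)" and st: "1 \<le> s" "d < s" "s \<le> t" "t + e \<le> length v"
  and dc: "d = 0 \<or> d + K < s" and ec: "e = 0 \<or> t + K + e \<le> length v"
  and xy: "s \<le> x" "x \<le> y" "y \<le> t"
  shows "viol \<Phi> v x y \<longleftrightarrow> viol \<Phi> v2 (x - d) (y - d)"
proof -
  have l2: "length v2 = length v - e - d" using v2 st by simp
  note BW = basic_window[OF v2 st dc ec]
  have "basic v x y ls \<and> rels_ok (lm \<Phi> v) (length v) x y ls \<longleftrightarrow> basic v2 (x - d) (y - d) ls \<and> rels_ok (lm \<Phi> v2) (length v2) (x - d) (y - d) ls"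
    if C: "(ls, HBot) \<in> set \<Phi>" for ls
  proof -
    have b: "basic v x y ls \<longleftrightarrow> basic v2 (x - d) (y - d) ls" using BW(1)[OF xy(1) _ _ xy(3) C] xy by auto
    have "rels_ok (lm \<Phi> v) (length v) x y ls \<longleftrightarrow> rels_ok (lm \<Phi> v2) (length v2) (x - d) (y - d) ls"
      if bb: "basic v x y ls"
    proof -
      have "lm \<Phi> v S (shift (length v) x (int a)) (minus_w y b) \<longleftrightarrow> lm \<Phi> v2 S (shift (length v2) (x - d) (int a)) (minus_w (y - d) b)"
        if R: "RLit S a b \<in> set ls" for S a b
      proof -
        have W: "shift (length v2) (x - d) (int a) = shift (length v) x (int a) - d" "minus_w (y - d) b = minus_w y b - d"
          using BW(2)[OF xy(1) _ _ xy(3) C R] xy by auto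
        have "x \<le> shift (length v) x (int a)" "minus_w y b \<le> y" "shift (length v) x (int a) \<le> minus_w y b"
          using xy st bb R by (auto simp: shift_pos minus_eq basic_def)
        then show ?thesis unfolding W using loc_lm[OF v2 st dc ec] xy by auto
      qed
      then show ?thesis unfolding rels_ok_def by blast
    qed
    then show ?thesis using b by blast
  qed
  then show ?thesis unfolding viol_def using xy st l2 by auto
qed

end

context hctx
begin

definition E :: "'s list \<Rightarrow> 's list + 's list \<times> 's list" where
  "E u = (if length u \<le> 2 * K + 2 then Inl u else Inr (take K u, take K (rev u)))"

definition T :: "'s list \<Rightarrow> ('s list \<times> 's list \<times> nat \<times> nat \<times> nat) set" where
  "T u = {(l, r, R, i, j). length l \<le> K \<and> length r \<le> K \<and> i \<le> A \<and> j \<le> A \<and> i + j < length u \<and>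
      lm \<Phi> (l @ u @ r) R (length l + 1 + i) (length l + length u - j)}"

definition V :: "'s list \<Rightarrow> ('s list \<times> 's list) set" where
  "V u = {(l, r). length l \<le> K \<and> length r \<le> K \<and>
      (\<exists>x y. length l < x \<and> y \<le> length l + length u \<and> viol \<Phi> (l @ u @ r) x y)}"

definition F where "F u = (E u, T u, V u)"

lemma sub_init:
  assumes u: "2 \<le> length u" and xy: "length l + 1 \<le> x" "x \<le> y" "y \<le> length l + length u - 1"
  shows "lm \<Phi> (l @ u @ r) R x y \<longleftrightarrow> lm \<Phi> (l @ butlast u @ take K (last u # r)) R x y"
    and "viol \<Phi> (l @ u @ r) x y \<longleftrightarrow> viol \<Phi> (l @ butlast u @ take K (last u # r)) x y"
proof -
  define r1 where "r1 = take K (last u # r)"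
  define e where "e = length r + 1 - length r1"
  have ueq: "l @ u @ r = l @ butlast u @ (last u # r)" using u
  proof -
    have "u \<noteq> []" using u by auto
    then have "u = butlast u @ [last u]" by simp
    then show ?thesis by (metis append.assoc append_Cons append_Nil)
  qed
  have lr1: "length r1 = min K (length r + 1)" unfolding r1_def by simp
  have v1: "l @ butlast u @ r1 = drop 0 (take (length (l @ u @ r) - e) (l @ u @ r))"
  proof -
    have "length (l @ u @ r) - e = length l + length (butlast u) + length r1" unfolding e_def using lr1 u by auto
    moreover have "take (min (length r) A) r = take A r" by (simp add: min_def)
    ultimately show ?thesis unfolding ueq r1_def by (simp add: take_append)
  qed
  have st: "1 \<le> length l + 1" "0 < length l + 1" "length l + 1 \<le> length l + length u - 1"
    "length l + length u - 1 + e \<le> length (l @ u @ r)" using u lr1 unfolding e_def by auto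
  have ec: "e = 0 \<or> length l + length u - 1 + K + e \<le> length (l @ u @ r)" using u lr1 unfolding e_def by auto
  show "lm \<Phi> (l @ u @ r) R x y \<longleftrightarrow> lm \<Phi> (l @ butlast u @ take K (last u # r)) R x y"
    using loc_lm[OF v1 st _ ec xy] unfolding r1_def by simp
  show "viol \<Phi> (l @ u @ r) x y \<longleftrightarrow> viol \<Phi> (l @ butlast u @ take K (last u # r)) x y"
    using loc_viol[OF v1 st _ ec xy] unfolding r1_def by simp
qed

lemma sub_tail:
  assumes u: "2 \<le> length u" and xy: "length l + 2 \<le> x" "x \<le> y" "y \<le> length l + length u"
  shows "lm \<Phi> (l @ u @ r) R x y \<longleftrightarrow> lm \<Phi> (drop (length l + 1 - K) (l @ [hd u]) @ tl u @ r) R (x - (length l + 1 - K)) (y - (length l + 1 - K))"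
    and "viol \<Phi> (l @ u @ r) x y \<longleftrightarrow> viol \<Phi> (drop (length l + 1 - K) (l @ [hd u]) @ tl u @ r) (x - (length l + 1 - K)) (y - (length l + 1 - K))"
proof -
  define d where "d = length l + 1 - K"
  have ueq: "l @ u @ r = (l @ [hd u]) @ tl u @ r" using u by (cases u) auto
  have v1: "drop d (l @ [hd u]) @ tl u @ r = drop d (take (length (l @ u @ r) - 0) (l @ u @ r))"
    unfolding ueq d_def by simp
  have st: "1 \<le> length l + 2" "d < length l + 2" "length l + 2 \<le> length l + length u"
    "length l + length u + 0 \<le> length (l @ u @ r)" using u unfolding d_def by auto
  have dc: "d = 0 \<or> d + K < length l + 2" unfolding d_def by auto
  show "lm \<Phi> (l @ u @ r) R x y \<longleftrightarrow> lm \<Phi> (drop (length l + 1 - K) (l @ [hd u]) @ tl u @ r) R (x - (length l + 1 - K)) (y - (length l + 1 - K))"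
    using loc_lm[OF v1 st dc _ xy] unfolding d_def by simp
  show "viol \<Phi> (l @ u @ r) x y \<longleftrightarrow> viol \<Phi> (drop (length l + 1 - K) (l @ [hd u]) @ tl u @ r) (x - (length l + 1 - K)) (y - (length l + 1 - K))"
    using loc_viol[OF v1 st dc _ xy] unfolding d_def by simp
qed

lemma dir_sub:
  assumes lu: "2 * K + 2 < length (butlast u)" "2 * K + 2 < length (butlast u')"
  and TB: "T (butlast u) = T (butlast u')" and TT: "T (tl u) = T (tl u')"
  and hdu: "hd u = hd u'" and lst: "last u = last u'"
  and lr: "length l \<le> K" "length r \<le> K" and ij: "i \<le> A" "j \<le> A" "(i, j) \<noteq> (0, 0)"
  and lmu: "lm \<Phi> (l @ u @ r) R (length l + 1 + i) (length l + length u - j)"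
  shows "lm \<Phi> (l @ u' @ r) R (length l + 1 + i) (length l + length u' - j)"
proof (cases "1 \<le> j")
  case True
  define r1 where "r1 = take K (last u # r)"
  have "lm \<Phi> (l @ butlast u @ r1) R (length l + 1 + i) (length l + length u - j)"
    using sub_init(1)[of u l "length l + 1 + i" "length l + length u - j" r R] lmu lu True ij unfolding r1_def by auto
  moreover have "length l + length (butlast u) - (j - 1) = length l + length u - j" using True lu by auto
  ultimately have "(l, r1, R, i, j - 1) \<in> T (butlast u)"
    unfolding T_def using lr ij True lu by (auto simp: r1_def)
  then have "(l, r1, R, i, j - 1) \<in> T (butlast u')" using TB by simp
  moreover have "length l + length (butlast u') - (j - 1) = length l + length u' - j" using True lu by auto
  ultimately have "lm \<Phi> (l @ butlast u' @ r1) R (length l + 1 + i) (length l + length u' - j)"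
    unfolding T_def by auto
  then show ?thesis
    using sub_init(1)[of u' l "length l + 1 + i" "length l + length u' - j" r R] lst lu True ij unfolding r1_def by auto
next
  case False
  then have j0: "j = 0" and i1: "1 \<le> i" using ij by auto
  define d where "d = length l + 1 - K"
  define l1 where "l1 = drop d (l @ [hd u])"
  have ll1: "length l1 = length l + 1 - d" "length l1 \<le> K" unfolding l1_def d_def by auto
  have md: "length l1 + d = length l + 1" unfolding l1_def d_def by auto
  have ltu: "length (tl u) = length u - 1" "length (tl u') = length u' - 1" by simp_all
  have u1: "1 \<le> length u" "1 \<le> length u'" using lu by auto
  have e1: "length l + 1 + i - d = length l1 + 1 + (i - 1)" using md i1 by linarith
  have e2: "length l + length u - d = length l1 + length (tl u) - 0" using md u1 unfolding ltu by linarith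
  have e2': "length l + length u' - d = length l1 + length (tl u') - 0" using md u1 unfolding ltu by linarith
  have "lm \<Phi> (l1 @ tl u @ r) R (length l + 1 + i - d) (length l + length u - d)"
    using sub_tail(1)[of u l "length l + 1 + i" "length l + length u" r R] lmu lu j0 i1 ij
    unfolding l1_def d_def by auto
  then have lmT: "lm \<Phi> (l1 @ tl u @ r) R (length l1 + 1 + (i - 1)) (length l1 + length (tl u) - 0)"
    unfolding e1 e2 .
  have "(l1, r, R, i - 1, 0) \<in> T (tl u)"
    unfolding T_def mem_Collect_eq prod.case
  proof (intro conjI)
    show "length l1 \<le> K" "length r \<le> K" "i - 1 \<le> A" "0 \<le> A" using ll1 lr ij by auto
    show "i - 1 + 0 < length (tl u)" using ij lu by simp
  qed (rule lmT)
  then have "(l1, r, R, i - 1, 0) \<in> T (tl u')" using TT by simp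
  then have "lm \<Phi> (l1 @ tl u' @ r) R (length l1 + 1 + (i - 1)) (length l1 + length (tl u') - 0)"
    unfolding T_def by simp
  then have "lm \<Phi> (l1 @ tl u' @ r) R (length l + 1 + i - d) (length l + length u' - d)"
    unfolding e1 e2' .
  then show ?thesis
    using sub_tail(1)[of u' l "length l + 1 + i" "length l + length u'" r R] hdu lu j0 i1 ij
    unfolding l1_def d_def by auto
qed

end

context hctx
begin

lemma take_left: "K \<le> length u \<Longrightarrow> take (length l + K) (l @ u @ r) = l @ take K u"
  by (simp add: take_append)

lemma take_right: "K \<le> length u \<Longrightarrow> take (length r + K) (rev (l @ u @ r)) = rev r @ take K (rev u)"
  by (simp add: take_append)

lemma left_zone:
  assumes lu: "2 * K + 2 < length u" "2 * K + 2 < length u'" and tk: "take K u = take K u'" and a: "nat \<bar>a\<bar> \<le> A"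
  shows "shift (length (l @ u' @ r)) (length l + 1) a = shift (length (l @ u @ r)) (length l + 1) a \<and>
     1 \<le> shift (length (l @ u @ r)) (length l + 1) a \<and> shift (length (l @ u @ r)) (length l + 1) a \<le> length l + K \<and>
     shift (length (l @ u @ r)) (length l + 1) a < length (l @ u @ r) \<and> shift (length (l @ u @ r)) (length l + 1) a < length (l @ u' @ r) \<and>
     (l @ u @ r) ! (shift (length (l @ u @ r)) (length l + 1) a - 1) = (l @ u' @ r) ! (shift (length (l @ u @ r)) (length l + 1) a - 1)"
proof -
  define q where "q = shift (length (l @ u @ r)) (length l + 1) a"
  have num: "shift (length (l @ u' @ r)) (length l + 1) a = q \<and> 1 \<le> q \<and> q \<le> length l + K \<and> q < length (l @ u @ r) \<and> q < length (l @ u' @ r)"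
  proof (cases "0 \<le> a")
    case True
    then show ?thesis unfolding q_def using lu a by (simp add: shift_pos min_def; arith)
  next
    case False
    then show ?thesis unfolding q_def using lu a by (simp add: shift_neg max_def; arith)
  qed
  have tl: "take (length l + K) (l @ u @ r) = take (length l + K) (l @ u' @ r)"
    using take_left[of u l r] take_left[of u' l r] lu tk by simp
  have "(l @ u @ r) ! (q - 1) = take (length l + K) (l @ u @ r) ! (q - 1)" using num by (subst nth_take) auto
  also have "\<dots> = take (length l + K) (l @ u' @ r) ! (q - 1)" using tl by simp
  also have "\<dots> = (l @ u' @ r) ! (q - 1)" using num by (subst nth_take) auto
  finally show ?thesis using num unfolding q_def by simp
qed

lemma right_zone:
  assumes lu: "2 * K + 2 < length u" "2 * K + 2 < length u'" and tk: "take K (rev u) = take K (rev u')" and a: "nat \<bar>a\<bar> \<le> A"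
  shows "shift (length (l @ u' @ r)) (length l + length u') a + length u = shift (length (l @ u @ r)) (length l + length u) a + length u' \<and>
     length l + K < shift (length (l @ u @ r)) (length l + length u) a \<and>
     length l + K < shift (length (l @ u' @ r)) (length l + length u') a \<and>
     shift (length (l @ u @ r)) (length l + length u) a \<le> length (l @ u @ r) \<and>
     shift (length (l @ u' @ r)) (length l + length u') a \<le> length (l @ u' @ r) \<and>
     (shift (length (l @ u @ r)) (length l + length u) a = length (l @ u @ r) \<longleftrightarrow>
      shift (length (l @ u' @ r)) (length l + length u') a = length (l @ u' @ r)) \<and>
     (l @ u @ r) ! (shift (length (l @ u @ r)) (length l + length u) a - 1) =
     (l @ u' @ r) ! (shift (length (l @ u' @ r)) (length l + length u') a - 1)"
proof -
  define q where "q = shift (length (l @ u @ r)) (length l + length u) a"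
  define q' where "q' = shift (length (l @ u' @ r)) (length l + length u') a"
  have num: "q' + length u = q + length u' \<and> length l + K < q \<and> length l + K < q' \<and> q \<le> length (l @ u @ r) \<and>
      q' \<le> length (l @ u' @ r) \<and> length (l @ u @ r) - q < length r + K \<and>
      length (l @ u @ r) - q = length (l @ u' @ r) - q'"
  proof (cases "0 \<le> a")
    case True
    then show ?thesis unfolding q_def q'_def using lu a by (simp add: shift_pos min_def; arith)
  next
    case False
    then show ?thesis unfolding q_def q'_def using lu a by (simp add: shift_neg max_def; arith)
  qed
  have tr: "take (length r + K) (rev (l @ u @ r)) = take (length r + K) (rev (l @ u' @ r))"
    using take_right[of u r l] take_right[of u' r l] lu tk by simp
  define m where "m = length (l @ u @ r) - q"
  have m': "m = length (l @ u' @ r) - q'" using num m_def by simp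
  have mq: "m < length (l @ u @ r)" "length (l @ u @ r) - Suc m = q - 1" "m < length (l @ u' @ r)" "length (l @ u' @ r) - Suc m = q' - 1"
    using num m' unfolding m_def by auto
  have "(l @ u @ r) ! (q - 1) = rev (l @ u @ r) ! m" using rev_nth[OF mq(1)] mq(2) by simp
  also have "\<dots> = take (length r + K) (rev (l @ u @ r)) ! m" using num m_def by (subst nth_take) auto
  also have "\<dots> = take (length r + K) (rev (l @ u' @ r)) ! m" using tr by simp
  also have "\<dots> = rev (l @ u' @ r) ! m" using num m_def by (subst nth_take) auto
  also have "\<dots> = (l @ u' @ r) ! (q' - 1)" using rev_nth[OF mq(3)] mq(4) by simp
  finally show ?thesis using num unfolding q_def q'_def by auto
qed

end

context hctx
begin

lemma upred_corr:
  assumes "v ! (q - 1) = v' ! (q' - 1)" "q = 1 \<longleftrightarrow> q' = 1" "q = length v \<longleftrightarrow> q' = length v'"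
  shows "upred_holds v U q \<longleftrightarrow> upred_holds v' U q'"
  using assms by (cases U) (auto simp: upred_holds_def)

lemma dir_top:
  assumes lu: "2 * K + 2 < length (butlast u)" "2 * K + 2 < length (butlast u')"
  and TB: "T (butlast u) = T (butlast u')" and TT: "T (tl u) = T (tl u')"
  and hdu: "hd u = hd u'" and lst: "last u = last u'"
  and tk: "take K u = take K u'" "take K (rev u) = take K (rev u')"
  and lr: "length l \<le> K" "length r \<le> K"
  and lmu: "lm \<Phi> (l @ u @ r) R (length l + 1) (length l + length u)"
  shows "lm \<Phi> (l @ u' @ r) R (length l + 1) (length l + length u')"
proof -
  have lu2: "2 * K + 2 < length u" "2 * K + 2 < length u'" using lu by auto
  define f where "f p = (if p \<le> length l + K then p else p + length u' - length u)" for p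
  have fx: "f (length l + 1) = length l + 1" unfolding f_def by simp
  have fy: "f (length l + length u) = length l + length u'" unfolding f_def using lu2 by simp
  note LZ = left_zone[OF lu2 tk(1), of _ l r]
  note RZ = right_zone[OF lu2 tk(2), of _ l r]
  have "lm \<Phi> (l @ u' @ r) R (f (length l + 1)) (f (length l + length u))"
  proof (rule lm_transfer[where P="{(length l + 1, length l + length u)}" and f=f and w="l @ u @ r"])
    show "lm \<Phi> (l @ u @ r) R (length l + 1) (length l + length u)" by (rule lmu)
    show "(length l + 1, length l + length u) \<in> {(length l + 1, length l + length u)}" by simp
    fix x y assume "(x, y) \<in> {(length l + 1, length l + length u)}"
    then have xy: "x = length l + 1" "y = length l + length u" by auto
    show "1 \<le> f x \<and> f x \<le> f y \<and> f y \<le> length (l @ u' @ r)" unfolding xy fx fy using lu2 by simp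
    fix ls h assume C: "(ls, h) \<in> set \<Phi>"
    have ms: "minus_w (length l + length u) b = shift (length (l @ u @ r)) (length l + length u) (- int b)"
      "minus_w (length l + length u') b = shift (length (l @ u' @ r)) (length l + length u') (- int b)" for b
    proof -
      show "minus_w (length l + length u) b = shift (length (l @ u @ r)) (length l + length u) (- int b)"
        by (rule minus_shift) (use lu2 in auto)
      show "minus_w (length l + length u') b = shift (length (l @ u' @ r)) (length l + length u') (- int b)"
        by (rule minus_shift) (use lu2 in auto)
    qed
    have lit: "hlit_holds (l @ u @ r) (\<lambda>_ _ _. True) x y lt \<longleftrightarrow> hlit_holds (l @ u' @ r) (\<lambda>_ _ _. True) (f x) (f y) lt"
      if lt: "lt \<in> set ls" for lt
    proof -
      have o: "litoff lt \<le> A" using off_le[OF C lt] by simp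
      show "hlit_holds (l @ u @ r) (\<lambda>_ _ _. True) x y lt \<longleftrightarrow> hlit_holds (l @ u' @ r) (\<lambda>_ _ _. True) (f x) (f y) lt"
      proof (cases lt)
        case (ULit pos U vv a)
        have a: "nat \<bar>a\<bar> \<le> A" using o ULit by simp
        show ?thesis
        proof (cases vv)
          case VX
          have "upred_holds (l @ u @ r) U (shift (length (l @ u @ r)) (length l + 1) a) \<longleftrightarrow>
                upred_holds (l @ u' @ r) U (shift (length (l @ u' @ r)) (length l + 1) a)"
            using LZ[OF a] by (intro upred_corr) auto
          then show ?thesis using ULit VX xy fx fy by auto
        next
          case VY
          have "upred_holds (l @ u @ r) U (shift (length (l @ u @ r)) (length l + length u) a) \<longleftrightarrow>
                upred_holds (l @ u' @ r) U (shift (length (l @ u' @ r)) (length l + length u') a)"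
            using RZ[OF a] by (intro upred_corr) auto
          then show ?thesis using ULit VY xy fx fy by auto
        qed
      next
        case XeqY
        then show ?thesis using xy lu2 fx fy by auto
      next
        case XltY
        then show ?thesis using xy lu2 fx fy by auto
      next
        case (RLit S a b)
        have a: "nat \<bar>int a\<bar> \<le> A" "nat \<bar>- int b\<bar> \<le> A" using o RLit by auto
        show ?thesis using RLit LZ[OF a(1)] RZ[OF a(2)] ms xy fx fy by auto
      qed
    qed
    show "basic (l @ u @ r) x y ls \<Longrightarrow> basic (l @ u' @ r) (f x) (f y) ls" unfolding basic_def using lit by blast
    fix S a b assume b: "basic (l @ u @ r) x y ls" and R: "RLit S a b \<in> set ls"
    have o: "litoff (RLit S a b) \<le> A" using off_le[OF C R] by simp
    have a: "nat \<bar>int a\<bar> \<le> A" "nat \<bar>- int b\<bar> \<le> A" "a \<le> A" "b \<le> A" using o by auto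
    have p: "shift (length (l @ u @ r)) (length l + 1) (int a) = length l + 1 + a" using a lu2 by (simp add: shift_pos)
    have q: "minus_w (length l + length u) b = length l + length u - b" using a lu2 by (simp add: minus_eq)
    have q': "minus_w (length l + length u') b = length l + length u' - b" using a lu2 by (simp add: minus_eq)
    show "shift (length (l @ u' @ r)) (f x) (int a) = f (shift (length (l @ u @ r)) x (int a)) \<and>
          minus_w (f y) b = f (minus_w y b)"
    proof
      show "shift (length (l @ u' @ r)) (f x) (int a) = f (shift (length (l @ u @ r)) x (int a))"
        using LZ[OF a(1)] unfolding xy fx f_def by auto
      show "minus_w (f y) b = f (minus_w y b)"
        unfolding xy fy q f_def using a lu2 q' by auto
    qed
    show "(shift (length (l @ u @ r)) x (int a), minus_w y b) \<notin> {(length l + 1, length l + length u)} \<Longrightarrow>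
       lm \<Phi> (l @ u @ r) S (shift (length (l @ u @ r)) x (int a)) (minus_w y b) \<Longrightarrow>
       lm \<Phi> (l @ u' @ r) S (f (shift (length (l @ u @ r)) x (int a))) (f (minus_w y b))"
    proof -
      assume np: "(shift (length (l @ u @ r)) x (int a), minus_w y b) \<notin> {(length l + 1, length l + length u)}"
        and lm1: "lm \<Phi> (l @ u @ r) S (shift (length (l @ u @ r)) x (int a)) (minus_w y b)"
      have ab: "(a, b) \<noteq> (0, 0)" using np unfolding xy p q by auto
      have "lm \<Phi> (l @ u' @ r) S (length l + 1 + a) (length l + length u' - b)"
        using dir_sub[OF lu TB TT hdu lst lr a(3) a(4) ab] lm1 unfolding xy p q by simp
      moreover have "f (length l + 1 + a) = length l + 1 + a" "f (length l + length u - b) = length l + length u' - b"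
        unfolding f_def using a lu2 by auto
      ultimately show ?thesis unfolding xy p q by simp
    qed
  qed
  then show ?thesis unfolding fx fy .
qed

lemma dir_T:
  assumes lu: "2 * K + 2 < length (butlast u)" "2 * K + 2 < length (butlast u')"
  and TB: "T (butlast u) = T (butlast u')" and TT: "T (tl u) = T (tl u')"
  and hdu: "hd u = hd u'" and lst: "last u = last u'"
  and tk: "take K u = take K u'" "take K (rev u) = take K (rev u')"
  shows "T u \<subseteq> T u'"
proof
  fix z assume "z \<in> T u"
  then obtain l r R i j where z: "z = (l, r, R, i, j)" and lr: "length l \<le> K" "length r \<le> K" and ij: "i \<le> A" "j \<le> A"
    and lmu: "lm \<Phi> (l @ u @ r) R (length l + 1 + i) (length l + length u - j)" unfolding T_def by blast
  have "lm \<Phi> (l @ u' @ r) R (length l + 1 + i) (length l + length u' - j)"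
  proof (cases "(i, j) = (0, 0)")
    case True
    then show ?thesis using dir_top[OF lu TB TT hdu lst tk lr] lmu by simp
  next
    case False
    then show ?thesis using dir_sub[OF lu TB TT hdu lst lr ij False lmu] by simp
  qed
  then show "z \<in> T u'" unfolding z T_def using lr ij lu by auto
qed

lemma top_basic:
  assumes lu2: "2 * K + 2 < length u" "2 * K + 2 < length u'"
  and tk: "take K u = take K u'" "take K (rev u) = take K (rev u')"
  and C: "(ls, h) \<in> set \<Phi>"
  shows "basic (l @ u @ r) (length l + 1) (length l + length u) ls \<Longrightarrow> basic (l @ u' @ r) (length l + 1) (length l + length u') ls"
proof -
  note LZ = left_zone[OF lu2 tk(1), of _ l r]
  note RZ = right_zone[OF lu2 tk(2), of _ l r]
  have ms: "minus_w (length l + length u) b = shift (length (l @ u @ r)) (length l + length u) (- int b)"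
      "minus_w (length l + length u') b = shift (length (l @ u' @ r)) (length l + length u') (- int b)" for b
  proof -
    show "minus_w (length l + length u) b = shift (length (l @ u @ r)) (length l + length u) (- int b)"
      by (rule minus_shift) (use lu2 in auto)
    show "minus_w (length l + length u') b = shift (length (l @ u' @ r)) (length l + length u') (- int b)"
      by (rule minus_shift) (use lu2 in auto)
  qed
  have lit: "hlit_holds (l @ u @ r) (\<lambda>_ _ _. True) (length l + 1) (length l + length u) lt \<longleftrightarrow>
      hlit_holds (l @ u' @ r) (\<lambda>_ _ _. True) (length l + 1) (length l + length u') lt"
    if lt: "lt \<in> set ls" for lt
  proof -
    have o: "litoff lt \<le> A" using off_le[OF C lt] by simp
    show ?thesis
    proof (cases lt)
      case (ULit pos U vv a)
      have a: "nat \<bar>a\<bar> \<le> A" using o ULit by simp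
      show ?thesis
      proof (cases vv)
        case VX
        have "upred_holds (l @ u @ r) U (shift (length (l @ u @ r)) (length l + 1) a) \<longleftrightarrow>
              upred_holds (l @ u' @ r) U (shift (length (l @ u' @ r)) (length l + 1) a)"
          using LZ[OF a] by (intro upred_corr) auto
        then show ?thesis using ULit VX by auto
      next
        case VY
        have "upred_holds (l @ u @ r) U (shift (length (l @ u @ r)) (length l + length u) a) \<longleftrightarrow>
              upred_holds (l @ u' @ r) U (shift (length (l @ u' @ r)) (length l + length u') a)"
          using RZ[OF a] by (intro upred_corr) auto
        then show ?thesis using ULit VY by auto
      qed
    next
      case XeqY
      then show ?thesis using lu2 by auto
    next
      case XltY
      then show ?thesis using lu2 by auto
    next
      case (RLit S a b)
      have a: "nat \<bar>int a\<bar> \<le> A" "nat \<bar>- int b\<bar> \<le> A" using o RLit by auto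
      show ?thesis using RLit LZ[OF a(1)] RZ[OF a(2)] ms by auto
    qed
  qed
  then show "basic (l @ u @ r) (length l + 1) (length l + length u) ls \<Longrightarrow> basic (l @ u' @ r) (length l + 1) (length l + length u') ls"
    unfolding basic_def by blast
qed

end

context hctx
begin

lemma dir_V:
  assumes lu: "2 * K + 2 < length (butlast u)" "2 * K + 2 < length (butlast u')"
  and TB: "T (butlast u) = T (butlast u')" and TT: "T (tl u) = T (tl u')"
  and VB: "V (butlast u) = V (butlast u')" and VT: "V (tl u) = V (tl u')"
  and hdu: "hd u = hd u'" and lst: "last u = last u'"
  and tk: "take K u = take K u'" "take K (rev u) = take K (rev u')"
  shows "V u \<subseteq> V u'"
proof
  have lu2: "2 * K + 2 < length u" "2 * K + 2 < length u'" using lu by auto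
  fix z assume "z \<in> V u"
  then obtain l r x y where z: "z = (l, r)" and lr: "length l \<le> K" "length r \<le> K" and xy: "length l < x" "y \<le> length l + length u"
    and vi: "viol \<Phi> (l @ u @ r) x y" unfolding V_def by blast
  have xley: "x \<le> y" using vi unfolding viol_def by auto
  have "\<exists>x y. length l < x \<and> y \<le> length l + length u' \<and> viol \<Phi> (l @ u' @ r) x y"
  proof (cases "y \<le> length l + length u - 1")
    case True
    define r1 where "r1 = take K (last u # r)"
    have "viol \<Phi> (l @ butlast u @ r1) x y" using sub_init(2)[of u l x y r] vi True xy xley lu2 unfolding r1_def by auto
    then have "(l, r1) \<in> V (butlast u)" unfolding V_def using lr xy True lu by (auto simp: r1_def)
    then have "(l, r1) \<in> V (butlast u')" using VB by simp
    then obtain x' y' where xy': "length l < x'" "y' \<le> length l + length (butlast u')" "viol \<Phi> (l @ butlast u' @ r1) x' y'"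
      unfolding V_def by blast
    have "x' \<le> y'" using xy' unfolding viol_def by auto
    then have "viol \<Phi> (l @ u' @ r) x' y'" using sub_init(2)[of u' l x' y' r] xy' lst lu2 unfolding r1_def by auto
    then show ?thesis using xy' by (intro exI[of _ x'] exI[of _ y']) auto
  next
    case False
    then have y: "y = length l + length u" using xy by auto
    show ?thesis
    proof (cases "length l + 2 \<le> x")
      case True
      define d where "d = length l + 1 - K"
      define l1 where "l1 = drop d (l @ [hd u])"
      have ll1: "length l1 = length l + 1 - d" "length l1 \<le> K" unfolding l1_def d_def by auto
      have "viol \<Phi> (l1 @ tl u @ r) (x - d) (y - d)" using sub_tail(2)[of u l x y r] vi True y xley lu2
        unfolding l1_def d_def by auto
      moreover have "length l1 < x - d" "y - d \<le> length l1 + length (tl u)" using ll1 True y lu2 unfolding d_def by auto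
      ultimately have "(l1, r) \<in> V (tl u)" unfolding V_def using lr ll1 by auto
      then have "(l1, r) \<in> V (tl u')" using VT by simp
      then obtain x' y' where xy': "length l1 < x'" "y' \<le> length l1 + length (tl u')" "viol \<Phi> (l1 @ tl u' @ r) x' y'"
        unfolding V_def by blast
      have "x' \<le> y'" using xy' unfolding viol_def by auto
      moreover have "length l + 2 \<le> x' + d" "y' + d \<le> length l + length u'" using xy' ll1 lu2 unfolding d_def by auto
      ultimately have "viol \<Phi> (l @ u' @ r) (x' + d) (y' + d)" using sub_tail(2)[of u' l "x' + d" "y' + d" r] xy' hdu lu2
        unfolding l1_def d_def by auto
      moreover have "length l < x' + d" "y' + d \<le> length l + length u'" using xy' ll1 lu2 unfolding d_def by auto
      ultimately show ?thesis by blast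
    next
      case False
      then have x: "x = length l + 1" using xy by auto
      obtain ls where ls: "(ls, HBot) \<in> set \<Phi>" "basic (l @ u @ r) x y ls" "rels_ok (lm \<Phi> (l @ u @ r)) (length (l @ u @ r)) x y ls"
        using vi unfolding viol_def by blast
      have b': "basic (l @ u' @ r) (length l + 1) (length l + length u') ls"
        using top_basic[OF lu2 tk ls(1)] ls(2) unfolding x y by simp
      have "rels_ok (lm \<Phi> (l @ u' @ r)) (length (l @ u' @ r)) (length l + 1) (length l + length u') ls"
        unfolding rels_ok_def
      proof (intro allI impI)
        fix S a b assume R: "RLit S a b \<in> set ls"
        have o: "litoff (RLit S a b) \<le> A" using off_le[OF ls(1) R] by simp
        have a: "a \<le> A" "b \<le> A" using o by auto
        have p: "shift (length (l @ u @ r)) (length l + 1) (int a) = length l + 1 + a" using a lu2 by (simp add: shift_pos)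
        have p': "shift (length (l @ u' @ r)) (length l + 1) (int a) = length l + 1 + a" using a lu2 by (simp add: shift_pos)
        have q: "minus_w (length l + length u) b = length l + length u - b" using a lu2 by (simp add: minus_eq)
        have q': "minus_w (length l + length u') b = length l + length u' - b" using a lu2 by (simp add: minus_eq)
        have lm1: "lm \<Phi> (l @ u @ r) S (length l + 1 + a) (length l + length u - b)"
          using ls(3) R unfolding rels_ok_def x y p q by (metis p q)
        have "lm \<Phi> (l @ u' @ r) S (length l + 1 + a) (length l + length u' - b)"
        proof (cases "(a, b) = (0, 0)")
          case True
          then show ?thesis using dir_top[OF lu TB TT hdu lst tk lr] lm1 by simp
        next
          case False
          then show ?thesis using dir_sub[OF lu TB TT hdu lst lr a False lm1] by simp
        qed
        then show "lm \<Phi> (l @ u' @ r) S (shift (length (l @ u' @ r)) (length l + 1) (int a)) (minus_w (length l + length u') b)"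
          unfolding p' q' .
      qed
      then have "viol \<Phi> (l @ u' @ r) (length l + 1) (length l + length u')"
        unfolding viol_def using ls(1) b' lu2 by auto
      then show ?thesis by (intro exI[of _ "length l + 1"] exI[of _ "length l + length u'"]) auto
    qed
  qed
  then show "z \<in> V u'" unfolding z V_def using lr by auto
qed

end

context hctx
begin

lemma F_cong:
  assumes u: "2 \<le> length u" "2 \<le> length u'" and FB: "F (butlast u) = F (butlast u')" and FT: "F (tl u) = F (tl u')"
  shows "F u = F u'"
proof -
  have EB: "E (butlast u) = E (butlast u')" and TB: "T (butlast u) = T (butlast u')" and VB: "V (butlast u) = V (butlast u')"
    using FB unfolding F_def by auto
  have ET: "E (tl u) = E (tl u')" and TT: "T (tl u) = T (tl u')" and VT: "V (tl u) = V (tl u')"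
    using FT unfolding F_def by auto
  show ?thesis
  proof (cases "length (butlast u) \<le> 2 * K + 2")
    case True
    then have "E (butlast u) = Inl (butlast u)" unfolding E_def by simp
    then have b: "butlast u' = butlast u" "length (butlast u') \<le> 2 * K + 2" using EB unfolding E_def by (auto split: if_splits)
    have "length (tl u) \<le> 2 * K + 2" using True by simp
    then have "E (tl u) = Inl (tl u)" unfolding E_def by simp
    then have t: "tl u' = tl u" using ET unfolding E_def by (auto split: if_splits)
    have "u = butlast u @ [last (tl u)]" using u by (cases u) (auto simp: last_tl)
    moreover have "u' = butlast u' @ [last (tl u')]" using u by (cases u') (auto simp: last_tl)
    ultimately have "u = u'" using b t by simp
    then show ?thesis by simp
  next
    case False
    then have "E (butlast u) = Inr (take K (butlast u), take K (rev (butlast u)))" unfolding E_def by simp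
    then have b: "2 * K + 2 < length (butlast u')" "take K (butlast u) = take K (butlast u')"
      using EB False unfolding E_def by (auto split: if_splits)
    have "E (tl u) = Inr (take K (tl u), take K (rev (tl u)))" using False unfolding E_def by simp
    then have t: "take K (rev (tl u)) = take K (rev (tl u'))" using ET b(1) unfolding E_def by (auto split: if_splits)
    have lu: "2 * K + 2 < length (butlast u)" "2 * K + 2 < length (butlast u')" using False b by auto
    have tk1: "take K u = take K u'"
    proof -
      have "take K u = take K (butlast u)" using lu by (simp add: take_butlast)
      moreover have "take K u' = take K (butlast u')" using lu by (simp add: take_butlast)
      ultimately show ?thesis using b by simp
    qed
    have tk2: "take K (rev u) = take K (rev u')"
    proof -
      have "take K (rev (tl u)) = take K (butlast (rev u))" by (simp only: butlast_rev)
      also have "\<dots> = take K (rev u)" by (rule take_butlast) (use lu in simp)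
      finally have 1: "take K (rev u) = take K (rev (tl u))" by simp
      have "take K (rev (tl u')) = take K (butlast (rev u'))" by (simp only: butlast_rev)
      also have "\<dots> = take K (rev u')" by (rule take_butlast) (use lu in simp)
      finally have 2: "take K (rev u') = take K (rev (tl u'))" by simp
      show ?thesis using 1 2 t by simp
    qed
    have hdu: "hd u = hd u'"
    proof -
      have "hd (take K u) = hd (take K u')" by (simp only: tk1)
      then show ?thesis by simp
    qed
    have lst: "last u = last u'"
    proof -
      have "hd (take K (rev u)) = hd (take K (rev u'))" by (simp only: tk2)
      then show ?thesis by (simp add: hd_rev)
    qed
    have "E u = E u'" unfolding E_def using lu tk1 tk2 by auto
    moreover have "T u = T u'"
      by (rule equalityI[OF dir_T[OF lu TB TT hdu lst tk1 tk2] dir_T[OF lu(2,1) TB[symmetric] TT[symmetric] hdu[symmetric] lst[symmetric] tk1[symmetric] tk2[symmetric]]])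
    moreover have "V u = V u'"
      by (rule equalityI[OF dir_V[OF lu TB TT VB VT hdu lst tk1 tk2] dir_V[OF lu(2,1) TB[symmetric] TT[symmetric] VB[symmetric] VT[symmetric] hdu[symmetric] lst[symmetric] tk1[symmetric] tk2[symmetric]]])
    ultimately show ?thesis unfolding F_def by simp
  qed
qed

lemma F_finite: "finite (F ` {u. u \<noteq> []})"
proof -
  define Lk :: "'s list set" where "Lk = {l. length l \<le> K}"
  have fLk: "finite Lk"
  proof -
    have "Lk = {xs. set xs \<subseteq> UNIV \<and> length xs \<le> K}" unfolding Lk_def by simp
    then show ?thesis using finite_lists_length_le[OF finite_UNIV[where 'a='s]] by simp
  qed
  have fL2: "finite {u :: 's list. length u \<le> 2 * K + 2}"
  proof -
    have "{u :: 's list. length u \<le> 2 * K + 2} = {xs. set xs \<subseteq> UNIV \<and> length xs \<le> 2 * K + 2}" by simp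
    then show ?thesis using finite_lists_length_le[OF finite_UNIV[where 'a='s]] by simp
  qed
  define Rs where "Rs = {R. \<exists>ls. (ls, HRel R) \<in> set \<Phi>}"
  have fRs: "finite Rs"
  proof -
    have "Rs \<subseteq> (\<lambda>C. case snd C of HRel R \<Rightarrow> R | HBot \<Rightarrow> 0) ` set \<Phi>"
      unfolding Rs_def by (force)
    then show ?thesis using finite_subset by blast
  qed
  define Eset where "Eset = Inl ` {u :: 's list. length u \<le> 2 * K + 2} \<union> Inr ` (Lk \<times> Lk)"
  define Tset where "Tset = Lk \<times> Lk \<times> Rs \<times> {..A} \<times> {..A}"
  have "F ` {u. u \<noteq> []} \<subseteq> Eset \<times> Pow Tset \<times> Pow (Lk \<times> Lk)"
  proof
    fix z assume "z \<in> F ` {u. u \<noteq> []}"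
    then obtain u where z: "z = F u" by blast
    have "E u \<in> Eset" unfolding E_def Eset_def Lk_def by auto
    moreover have "T u \<subseteq> Tset"
    proof
      fix y assume "y \<in> T u"
      then obtain l r R i j where y: "y = (l, r, R, i, j)" "length l \<le> K" "length r \<le> K" "i \<le> A" "j \<le> A"
        "lm \<Phi> (l @ u @ r) R (length l + 1 + i) (length l + length u - j)" unfolding T_def by blast
      have "R \<in> Rs" using lm_head[OF y(6)] unfolding Rs_def by simp
      then show "y \<in> Tset" unfolding Tset_def Lk_def using y by simp
    qed
    moreover have "V u \<subseteq> Lk \<times> Lk" unfolding V_def Lk_def by auto
    ultimately show "z \<in> Eset \<times> Pow Tset \<times> Pow (Lk \<times> Lk)" unfolding z F_def by auto
  qed
  moreover have "finite (Eset \<times> Pow Tset \<times> Pow (Lk \<times> Lk))"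
    unfolding Eset_def Tset_def using fLk fL2 fRs by simp
  ultimately show ?thesis using finite_subset by blast
qed

lemma lang_V: "w \<in> incl_horn_lang \<Phi> \<longleftrightarrow> w \<noteq> [] \<and> ([], []) \<notin> V w"
proof -
  have "([], []) \<in> V w \<longleftrightarrow> (\<exists>x y. 0 < x \<and> y \<le> length w \<and> viol \<Phi> w x y)" unfolding V_def by simp
  also have "\<dots> \<longleftrightarrow> (\<exists>x y. viol \<Phi> w x y)" unfolding viol_def by (meson less_le_trans zero_less_one)
  finally show ?thesis unfolding incl_horn_lang_def models_iff by blast
qed

lemma horn_trellis: "incl_horn_lang \<Phi> \<in> Trellis"
proof (rule trellis_from_F[where F=F])
  show "incl_horn_lang \<Phi> \<subseteq> {w. w \<noteq> []}" unfolding incl_horn_lang_def by auto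
  show "finite (F ` {u. u \<noteq> []})" by (rule F_finite)
  show "\<And>u u'. 2 \<le> length u \<Longrightarrow> 2 \<le> length u' \<Longrightarrow> F (butlast u) = F (butlast u') \<Longrightarrow> F (tl u) = F (tl u') \<Longrightarrow> F u = F u'"
    by (rule F_cong)
  show "\<And>w w'. w \<noteq> [] \<Longrightarrow> w' \<noteq> [] \<Longrightarrow> F w = F w' \<Longrightarrow> w \<in> incl_horn_lang \<Phi> \<Longrightarrow> w' \<in> incl_horn_lang \<Phi>"
    unfolding lang_V F_def by auto
qed

end

theorem theorem4:
  shows "(incl_ESO_HORN :: ('s::finite) list set set) = Trellis"
proof
  show "(incl_ESO_HORN :: ('s::finite) list set set) \<subseteq> Trellis"
  proof
    fix L :: "'s list set" assume "L \<in> incl_ESO_HORN"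
    then obtain \<Phi> where "L = incl_horn_lang \<Phi>" unfolding incl_ESO_HORN_def by blast
    then show "L \<in> Trellis" using hctx.horn_trellis[of \<Phi>] by simp
  qed
  show "Trellis \<subseteq> (incl_ESO_HORN :: ('s::finite) list set set)"
    using trellis_to_horn by blast
qed


end
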